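(* Let $S\subseteq 2^E$ be a powerful set with $|E|=n\ge 2$. Then $r_S(E)=n-1$ if and only if $S$ has a star element.
   Context: A set $S\subseteq 2^E$ ($E$ finite) is powerful if for every $X\subseteq E$ the number of members of $S$ contained in $X$ is a power of 2. Its rank function is $r_S(X)=\log_2\big(|S|/|\{Y\in S:Y\subseteq E\setminus X\}|\big)$. An element $e\in E$ is a star of $S$ if there exists $T\subseteq 2^{E\setminus\{e\}}$ such that $S=\{X: X\in T\}\cup\{X\cup\{e\}: X\subseteq E\setminus\{e\},\ X\notin T\}$. *)

theory Defs
  imports Complex_Main
begin

definition powerful :: "'a set \<Rightarrow> 'a set set \<Rightarrow> bool" where
  "powerful E S \<longleftrightarrow> S \<subseteq> Pow E \<and>
     (\<forall>X. X \<subseteq> E \<longrightarrow> (\<exists>k::nat. card {Y \<in> S. Y \<subseteq> X} = 2 ^ k))"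

definition rank_S :: "'a set \<Rightarrow> 'a set set \<Rightarrow> 'a set \<Rightarrow> real" where
  "rank_S E S X = log 2 (real (card S) / real (card {Y \<in> S. Y \<subseteq> E - X}))"

definition is_star :: "'a set \<Rightarrow> 'a set set \<Rightarrow> 'a \<Rightarrow> bool" where
  "is_star E S e \<longleftrightarrow> e \<in> E \<and> (\<exists>T. T \<subseteq> Pow (E - {e}) \<and>
     S = T \<union> {insert e X | X. X \<subseteq> E - {e} \<and> X \<notin> T})"

end

theory Submission
  imports Defs
begin

locale pw =
  fixes E :: "'a set" and S :: "'a set set"
  assumes finE: "finite E" and pwf: "powerful E S"
begin

definition f where "f Z = card {Y\<in>S. Y \<subseteq> Z}"
definition H where "H Z \<longleftrightarrow> 2 * f Z = 2 ^ card Z"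
definition F where "F Z P = card {V\<in>S. V \<subseteq> Z \<and> P \<subseteq> V}"
definition pstar where "pstar Z x \<longleftrightarrow> (\<forall>X. X \<subseteq> Z - {x} \<longrightarrow> (X \<in> S \<longleftrightarrow> insert x X \<notin> S))"

lemma SPow: "S \<subseteq> Pow E" using pwf unfolding powerful_def by blast

lemma finS: "finite S" using SPow finE by (meson finite_Pow_iff finite_subset)

lemma f_pow: "Z \<subseteq> E \<Longrightarrow> \<exists>k. f Z = 2^k"
  using pwf unfolding powerful_def f_def by blast

lemma emp: "{} \<in> S"
proof -
  obtain k where k: "f {} = 2^k" using f_pow by blast
  hence "card {Y\<in>S. Y \<subseteq> {}} \<noteq> 0" unfolding f_def by simp
  hence "{Y\<in>S. Y \<subseteq> {}} \<noteq> {}" by (metis card.empty)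
  thus ?thesis by auto
qed

lemma finsub: "finite {Y\<in>S. P Y}" using finS by simp

lemma f_ge1: "1 \<le> f Z"
proof -
  have "{} \<in> {Y\<in>S. Y \<subseteq> Z}" using emp by simp
  hence "{Y\<in>S. Y \<subseteq> Z} \<noteq> {}" by blast
  thus ?thesis unfolding f_def using finsub[of "\<lambda>Y. Y \<subseteq> Z"]
    by (simp add: Suc_leI card_gt_0_iff)
qed

lemma f_mono: "Z \<subseteq> Z' \<Longrightarrow> f Z \<le> f Z'"
  unfolding f_def by (rule card_mono[OF finsub]) auto

lemma f_le: "finite Z \<Longrightarrow> f Z \<le> 2 ^ card Z"
proof -
  assume "finite Z"
  have "f Z \<le> card (Pow Z)" unfolding f_def
    by (rule card_mono) (use \<open>finite Z\<close> in auto)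
  thus ?thesis using \<open>finite Z\<close> by (simp add: card_Pow)
qed

lemma f_full: "finite Z \<Longrightarrow> f Z = 2 ^ card Z \<Longrightarrow> Pow Z \<subseteq> S"
proof -
  assume a: "finite Z" "f Z = 2 ^ card Z"
  have "{Y\<in>S. Y \<subseteq> Z} = Pow Z"
    by (rule card_subset_eq) (use a in \<open>auto simp: f_def card_Pow\<close>)
  thus ?thesis by blast
qed

lemma full_f: "finite Z \<Longrightarrow> Pow Z \<subseteq> S \<Longrightarrow> f Z = 2 ^ card Z"
proof -
  assume a: "finite Z" "Pow Z \<subseteq> S"
  have "{Y\<in>S. Y \<subseteq> Z} = Pow Z" using a by blast
  thus ?thesis using a by (simp add: f_def card_Pow)
qed

lemma F0: "F Z {} = f Z" unfolding F_def f_def by simp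

lemma Fsplit: "int (F Z (insert u P)) = int (F Z P) - int (F (Z - {u}) P)"
proof -
  have e: "{V\<in>S. V \<subseteq> Z \<and> P \<subseteq> V} = {V\<in>S. V \<subseteq> Z \<and> insert u P \<subseteq> V} \<union> {V\<in>S. V \<subseteq> Z - {u} \<and> P \<subseteq> V}"
    by auto
  have "card {V\<in>S. V \<subseteq> Z \<and> P \<subseteq> V} = card {V\<in>S. V \<subseteq> Z \<and> insert u P \<subseteq> V} + card {V\<in>S. V \<subseteq> Z - {u} \<and> P \<subseteq> V}"
    unfolding e by (rule card_Un_disjoint) (auto simp: finsub)
  thus ?thesis unfolding F_def by simp
qed

lemma card_sup: "finite Z \<Longrightarrow> P \<subseteq> Z \<Longrightarrow> card {V. V \<subseteq> Z \<and> P \<subseteq> V} = 2 ^ (card Z - card P)"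
proof -
  assume a: "finite Z" "P \<subseteq> Z"
  have "bij_betw (\<lambda>D. P \<union> D) (Pow (Z - P)) {V. V \<subseteq> Z \<and> P \<subseteq> V}"
    by (rule bij_betw_byWitness[where f'="\<lambda>V. V - P"]) (use a in blast)+
  hence "card {V. V \<subseteq> Z \<and> P \<subseteq> V} = card (Pow (Z - P))" by (simp add: bij_betw_same_card)
  also have "\<dots> = 2 ^ (card Z - card P)" using a
    by (simp add: card_Pow card_Diff_subset finite_subset)
  finally show ?thesis .
qed

lemma F_le: "finite Z \<Longrightarrow> P \<subseteq> Z \<Longrightarrow> F Z P \<le> 2 ^ (card Z - card P)"
proof -
  assume a: "finite Z" "P \<subseteq> Z"
  have "F Z P \<le> card {V. V \<subseteq> Z \<and> P \<subseteq> V}" unfolding F_def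
    by (rule card_mono) (use a in \<open>auto intro: finite_subset[of _ "Pow Z"]\<close>)
  thus ?thesis using card_sup[OF a] by simp
qed

lemma F_all: "finite Z \<Longrightarrow> P \<subseteq> Z \<Longrightarrow> F Z P = 2 ^ (card Z - card P) \<Longrightarrow> V \<subseteq> Z \<Longrightarrow> P \<subseteq> V \<Longrightarrow> V \<in> S"
proof -
  assume a: "finite Z" "P \<subseteq> Z" "F Z P = 2 ^ (card Z - card P)" "V \<subseteq> Z" "P \<subseteq> V"
  have fin: "finite {V. V \<subseteq> Z \<and> P \<subseteq> V}" using a by (auto intro: finite_subset[of _ "Pow Z"])
  have "{V\<in>S. V \<subseteq> Z \<and> P \<subseteq> V} = {V. V \<subseteq> Z \<and> P \<subseteq> V}"
    by (rule card_subset_eq[OF fin]) (use a card_sup[OF a(1,2)] in \<open>auto simp: F_def\<close>)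
  thus ?thesis using a by blast
qed

lemma F1: "F Z {u} = f Z - f (Z - {u})"
  using Fsplit[of Z u "{}"] by (simp add: F0)

lemma F1_zero: "f Z = f (Z - {u}) \<Longrightarrow> V \<in> S \<Longrightarrow> V \<subseteq> Z \<Longrightarrow> u \<notin> V"
proof -
  assume a: "f Z = f (Z - {u})" "V \<in> S" "V \<subseteq> Z"
  have "F Z {u} = 0" using F1 a by simp
  hence "{V\<in>S. V \<subseteq> Z \<and> {u} \<subseteq> V} = {}" unfolding F_def using finsub by simp
  thus ?thesis using a by blast
qed

definition d where "d x X = of_bool (X \<in> S) + (of_bool (insert x X \<in> S) :: nat)"

lemma f_ins_sum: "finite X \<Longrightarrow> x \<notin> X \<Longrightarrow> f (insert x X) = (\<Sum>X'\<in>Pow X. d x X')"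
proof -
  assume a: "finite X" "x \<notin> X"
  have e: "{Y\<in>S. Y \<subseteq> insert x X} = {Y\<in>S. Y \<subseteq> X} \<union> insert x ` {X'\<in>Pow X. insert x X' \<in> S}"
  proof (rule set_eqI, rule iffI)
    fix Y assume "Y \<in> {Y\<in>S. Y \<subseteq> insert x X}"
    thus "Y \<in> {Y\<in>S. Y \<subseteq> X} \<union> insert x ` {X'\<in>Pow X. insert x X' \<in> S}"
    proof (cases "x \<in> Y")
      case True
      hence "Y = insert x (Y - {x})" by blast
      moreover have "Y - {x} \<in> {X'\<in>Pow X. insert x X' \<in> S}"
        using \<open>Y \<in> _\<close> True calculation by auto
      ultimately show ?thesis by blast
    qed auto
  qed auto
  have inj: "inj_on (insert x) {X'\<in>Pow X. insert x X' \<in> S}"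
  proof (rule inj_onI)
    fix A B assume "A \<in> {X'\<in>Pow X. insert x X' \<in> S}" "B \<in> {X'\<in>Pow X. insert x X' \<in> S}" "insert x A = insert x B"
    hence "x \<notin> A" "x \<notin> B" using a by auto
    thus "A = B" using \<open>insert x A = insert x B\<close> by (metis Diff_insert_absorb)
  qed
  have fin2: "finite {X'\<in>Pow X. insert x X' \<in> S}" using a by simp
  have "f (insert x X) = card {Y\<in>S. Y \<subseteq> X} + card (insert x ` {X'\<in>Pow X. insert x X' \<in> S})"
    unfolding f_def e by (rule card_Un_disjoint) (use a fin2 finsub in auto)
  also have "\<dots> = card (Pow X \<inter> {X'. X' \<in> S}) + card (Pow X \<inter> {X'. insert x X' \<in> S})"
  proof -
    have "{Y\<in>S. Y \<subseteq> X} = Pow X \<inter> {X'. X' \<in> S}" by blast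
    moreover have "{X'\<in>Pow X. insert x X' \<in> S} = Pow X \<inter> {X'. insert x X' \<in> S}" by blast
    ultimately show ?thesis using card_image[OF inj] by simp
  qed
  also have "\<dots> = (\<Sum>X'\<in>Pow X. d x X')"
    unfolding d_def sum.distrib using a by simp
  finally show ?thesis .
qed

lemma d_one: "d x X = 1 \<longleftrightarrow> (X \<in> S \<longleftrightarrow> insert x X \<notin> S)"
  by (auto simp: d_def)

lemma H_iff: "finite Z \<Longrightarrow> card Z = Suc k \<Longrightarrow> H Z \<longleftrightarrow> f Z = 2 ^ k"
  unfolding H_def by auto

lemma H_empty: "\<not> H {}"
  unfolding H_def using f_ge1[of "{}"] by auto

lemma sum_d_ones:
  assumes "finite A" "\<And>X. X \<in> A \<Longrightarrow> d x X = 1"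
  shows "sum (d x) A = card A"
  using assms by simp

lemma F3:
  assumes "finite Z" "pstar Z x" "x \<in> Y" "Y \<subseteq> Z"
  shows "H Y"
proof -
  have fY: "finite Y" using assms finite_subset by blast
  have "card Y > 0" using fY assms(3) card_gt_0_iff by blast
  hence cY: "card Y = Suc (card (Y - {x}))" using fY assms(3) by simp
  have "f Y = f (insert x (Y - {x}))" using assms(3) by (simp add: insert_absorb)
  also have "\<dots> = sum (d x) (Pow (Y - {x}))" by (rule f_ins_sum) (use fY in auto)
  also have "\<dots> = card (Pow (Y - {x}))"
  proof (rule sum_d_ones)
    show "finite (Pow (Y - {x}))" using fY by simp
    fix X assume "X \<in> Pow (Y - {x})"
    hence "X \<subseteq> Z - {x}" using assms(4) by blast
    thus "d x X = 1" using assms(2) unfolding pstar_def d_one by blast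
  qed
  also have "\<dots> = 2 ^ card (Y - {x})" using fY by (simp add: card_Pow)
  finally show ?thesis using H_iff[OF fY cY] by simp
qed

lemma F4:
  assumes "finite Z" "x \<in> Z" "\<And>Y. x \<in> Y \<Longrightarrow> Y \<subseteq> Z \<Longrightarrow> H Y"
  shows "pstar Z x"
proof -
  have "X \<subseteq> Z - {x} \<longrightarrow> d x X = 1" if "finite X" for X
    using that
  proof (induction X rule: finite_psubset_induct)
    case (psubset X)
    show ?case
    proof
      assume X: "X \<subseteq> Z - {x}"
      have xX: "x \<notin> X" using X by blast
      have Hi: "H (insert x X)" using assms(3)[of "insert x X"] X assms(2) by blast
      have "f (insert x X) = 2 ^ card X"
        using Hi H_iff[of "insert x X" "card X"] psubset.hyps xX by simp
      moreover have "f (insert x X) = sum (d x) (Pow X)" by (rule f_ins_sum) (use psubset.hyps xX in auto)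
      moreover have "sum (d x) (Pow X) = d x X + sum (d x) (Pow X - {X})"
        by (rule sum.remove) (use psubset.hyps in auto)
      moreover have "sum (d x) (Pow X - {X}) = card (Pow X - {X})"
      proof (rule sum_d_ones)
        show "finite (Pow X - {X})" using psubset.hyps by simp
        fix Y assume "Y \<in> Pow X - {X}"
        hence "Y \<subset> X" "Y \<subseteq> Z - {x}" using X by auto
        thus "d x Y = 1" using psubset.IH by blast
      qed
      moreover have "card (Pow X - {X}) = 2 ^ card X - 1"
        using psubset.hyps by (simp add: card_Pow)
      moreover have "(1::nat) \<le> 2 ^ card X" by simp
      ultimately show "d x X = 1" by linarith
    qed
  qed
  thus ?thesis unfolding pstar_def using assms(1) d_one by (meson finite_Diff finite_subset)
qed

lemma KI: "int (F Z {x, y}) = int (f Z) - int (f (Z - {y})) - int (f (Z - {x})) + int (f (Z - {x} - {y}))"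
  using Fsplit[of Z x "{y}"] Fsplit[of Z y "{}"] Fsplit[of "Z - {x}" y "{}"] by (simp add: F0)

lemma finZ: "Z \<subseteq> E \<Longrightarrow> finite Z" using finE finite_subset by blast

lemma L2:
  shows "Z \<subseteq> E \<Longrightarrow> H Z \<Longrightarrow> x \<in> Z \<Longrightarrow> \<not> H (Z - {x}) \<Longrightarrow> pstar Z x"
proof (induction "card Z" arbitrary: Z rule: less_induct)
  case less
  have fZ: "finite Z" using less.prems finZ by blast
  obtain m1 where m1: "card Z = Suc m1" using less.prems(3) fZ
    by (metis card_Suc_Diff1)
  have cZx: "card (Z - {x}) = m1" using m1 less.prems(3) fZ by simp
  have fZv: "f Z = 2 ^ m1" using H_iff[OF fZ m1] less.prems(2) by simp
  obtain k where k: "f (Z - {x}) = 2 ^ k" using f_pow less.prems(1) by blast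
  have "f (Z - {x}) \<le> 2 ^ m1" using f_le[of "Z - {x}"] fZ cZx by simp
  hence km1: "k \<le> m1" using k by simp
  show ?case
  proof (cases "k = m1")
    case True
    have P: "Pow (Z - {x}) \<subseteq> S" using f_full[of "Z - {x}"] fZ cZx k True by simp
    have N: "V \<in> S \<Longrightarrow> V \<subseteq> Z \<Longrightarrow> x \<notin> V" for V
      using F1_zero[of Z x V] fZv k True by simp
    show ?thesis unfolding pstar_def
    proof (intro allI impI)
      fix X assume X: "X \<subseteq> Z - {x}"
      hence "X \<in> S" using P by blast
      moreover have "insert x X \<notin> S" using N[of "insert x X"] X less.prems(3) by blast
      ultimately show "X \<in> S \<longleftrightarrow> insert x X \<notin> S" by blast
    qed
  next
    case False
    have "m1 \<noteq> Suc k"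
    proof
      assume "m1 = Suc k"
      hence "H (Z - {x})" using H_iff[of "Z - {x}" k] fZ cZx k by simp
      thus False using less.prems(4) by blast
    qed
    then obtain m3 where m3: "m1 = Suc (Suc m3)" "k \<le> m3" using False km1
      by (metis Suc_le_D le_SucE le_antisym not_less_eq_eq)
    have fZx: "f (Z - {x}) \<le> 2 ^ m3" using k m3 by simp
    have pos3: "0 < (2::nat) ^ m3" by simp
    have Hy: "f (Z - {y}) = 2 ^ Suc m3" if y: "y \<in> Z" "y \<noteq> x" for y
    proof -
      obtain j where j: "f (Z - {y}) = 2 ^ j" using f_pow less.prems(1) by blast
      have cZy: "card (Z - {y}) = Suc (Suc m3)" using m1 m3 y fZ by simp
      have cZxy: "card (Z - {x} - {y}) = Suc m3" using cZx m3 y by simp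
      have h: "2 ^ j \<le> (2::nat) ^ Suc (Suc m3)" using f_le[of "Z - {y}"] fZ cZy j by (simp del: power_Suc)
      have "j \<le> Suc (Suc m3)" by (rule power_le_imp_le_exp[OF _ h]) simp
      moreover have "j \<noteq> Suc (Suc m3)"
      proof
        assume "j = Suc (Suc m3)"
        hence "Pow (Z - {y}) \<subseteq> S" using f_full[of "Z - {y}"] fZ cZy j by simp
        hence "Pow (Z - {x} - {y}) \<subseteq> S" by blast
        hence "f (Z - {x} - {y}) = 2 ^ Suc m3" using full_f[of "Z - {x} - {y}"] fZ cZxy by simp
        moreover have "f (Z - {x} - {y}) \<le> f (Z - {x})" by (rule f_mono) blast
        ultimately show False using fZx pos3 by simp
      qed
      moreover have "\<not> j \<le> m3"
      proof
        assume "j \<le> m3"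
        hence a: "f (Z - {y}) \<le> 2 ^ m3" using j by simp
        have "F Z {x, y} \<le> 2 ^ (card Z - card {x, y})" by (rule F_le) (use fZ y less.prems(3) in auto)
        hence "F Z {x, y} \<le> 2 ^ Suc m3" using m1 m3 y by simp
        hence "int (F Z {x, y}) \<le> 2 ^ Suc m3" by (metis of_nat_le_iff of_nat_numeral of_nat_power)
        hence "int (f Z) - int (f (Z - {y})) - int (f (Z - {x})) + int (f (Z - {x} - {y})) \<le> 2 ^ Suc m3"
          using KI[of Z x y] by linarith
        moreover have "1 \<le> f (Z - {x} - {y})" by (rule f_ge1)
        moreover have "int (f (Z - {y})) \<le> 2 ^ m3" using a by (metis of_nat_le_iff of_nat_numeral of_nat_power)
        moreover have "int (f (Z - {x})) \<le> 2 ^ m3" using fZx by (metis of_nat_le_iff of_nat_numeral of_nat_power)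
        moreover have "int (f Z) = 4 * 2 ^ m3" using fZv m3 by simp
        ultimately show False by simp
      qed
      ultimately have "j = Suc m3" by linarith
      thus ?thesis using j by simp
    qed
    define G where "G = {y \<in> Z - {x}. \<not> H (Z - {y} - {x})}"
    have pair: "d x X = 1" if X: "X \<subseteq> Z - {x}" "X \<noteq> G" for X
    proof (cases "\<exists>y\<in>G. y \<notin> X")
      case True
      then obtain y where y: "y \<in> G" "y \<notin> X" by blast
      have "pstar (Z - {y}) x"
      proof (rule less.hyps)
        show "card (Z - {y}) < card Z" using y card_Diff1_less[OF fZ, of y] unfolding G_def by blast
        show "Z - {y} \<subseteq> E" using less.prems by blast
        show "H (Z - {y})" using Hy[of y] y H_iff[of "Z - {y}" "Suc m3"] fZ m1 m3 unfolding G_def by simp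
        show "x \<in> Z - {y}" using y less.prems(3) unfolding G_def by blast
        show "\<not> H (Z - {y} - {x})" using y unfolding G_def by blast
      qed
      thus ?thesis using X y unfolding pstar_def d_one by blast
    next
      case False
      hence "G \<subseteq> X" by blast
      then obtain y where y: "y \<in> X" "y \<notin> G" using X by blast
      have yZ: "y \<in> Z" "y \<noteq> x" using y X by auto
      have e: "Z - {y} - {x} = Z - {x} - {y}" by blast
      have cZxy: "card (Z - {x} - {y}) = Suc m3" using cZx m3 yZ by simp
      have "H (Z - {x} - {y})" using y yZ e unfolding G_def by auto
      hence fxy: "f (Z - {x} - {y}) = 2 ^ m3" using H_iff[OF _ cZxy] fZ by simp
      have "f (Z - {x} - {y}) \<le> f (Z - {x})" by (rule f_mono) blast
      hence eqf: "f (Z - {x}) = f (Z - {x} - {y})" using fxy fZx by simp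
      have "X \<notin> S" using F1_zero[OF eqf, of X] X y by blast
      have "int (F Z {x, y}) = 2 ^ Suc m3" using KI[of Z x y] Hy[OF yZ] fZv m3 eqf fxy by simp
      hence "F Z {x, y} = 2 ^ Suc m3" by (metis of_nat_eq_iff of_nat_numeral of_nat_power)
      hence "F Z {x, y} = 2 ^ (card Z - card {x, y})" using m1 m3 yZ by simp
      hence Fe: "F Z {x, y} = 2 ^ (card Z - card {x, y})" .
      have "insert x X \<in> S"
      proof (rule F_all[OF fZ _ Fe])
        show "{x, y} \<subseteq> Z" using less.prems(3) yZ by blast
        show "insert x X \<subseteq> Z" using less.prems(3) X by blast
        show "{x, y} \<subseteq> insert x X" using y by blast
      qed
      thus ?thesis using \<open>X \<notin> S\<close> d_one by blast
    qed
    have GZ: "G \<subseteq> Z - {x}" unfolding G_def by blast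
    have fin: "finite (Pow (Z - {x}))" using fZ by simp
    have "f Z = sum (d x) (Pow (Z - {x}))"
      using f_ins_sum[of "Z - {x}" x] fZ less.prems(3) by (simp add: insert_absorb)
    also have "\<dots> = d x G + sum (d x) (Pow (Z - {x}) - {G})"
      by (rule sum.remove) (use fin GZ in auto)
    also have "sum (d x) (Pow (Z - {x}) - {G}) = card (Pow (Z - {x}) - {G})"
    proof (rule sum_d_ones)
      show "finite (Pow (Z - {x}) - {G})" using fin by simp
      fix X assume "X \<in> Pow (Z - {x}) - {G}"
      thus "d x X = 1" using pair by blast
    qed
    also have "card (Pow (Z - {x}) - {G}) = 2 ^ m1 - 1"
      using fZ GZ cZx by (simp add: card_Pow)
    finally have "f Z = d x G + (2 ^ m1 - 1)" .
    moreover have "(1::nat) \<le> 2 ^ m1" by simp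
    ultimately have "d x G = 1" using fZv by linarith
    hence pG: "G \<in> S \<longleftrightarrow> insert x G \<notin> S" using d_one by blast
    show ?thesis unfolding pstar_def
    proof (intro allI impI)
      fix X assume X: "X \<subseteq> Z - {x}"
      show "X \<in> S \<longleftrightarrow> insert x X \<notin> S"
      proof (cases "X = G")
        case True thus ?thesis using pG by simp
      next
        case False thus ?thesis using pair[OF X] d_one by blast
      qed
    qed
  qed
qed

lemma side:
  assumes "A \<subseteq> E" "\<not> H A" "y \<in> A" "H (A - {y})"
  obtains a2 where "card A = Suc (Suc a2)" "f A = 2 ^ a2" "f (A - {y}) = 2 ^ a2"
proof -
  have fA: "finite A" using assms(1) finZ by blast
  obtain a1 where a1: "card A = Suc a1" using fA assms(3) by (metis card_Suc_Diff1)
  have ca: "card (A - {y}) = a1" using a1 assms(3) fA by simp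
  have "a1 \<noteq> 0"
  proof
    assume "a1 = 0"
    hence "2 * f (A - {y}) = 1" using assms(4) ca unfolding H_def by simp
    thus False by presburger
  qed
  then obtain a2 where a2: "a1 = Suc a2" using not0_implies_Suc by blast
  have fy: "f (A - {y}) = 2 ^ a2" using H_iff[of "A - {y}" a2] assms(4) ca a2 fA by simp
  obtain k where k: "f A = 2 ^ k" using f_pow assms(1) by blast
  have "f (A - {y}) \<le> f A" by (rule f_mono) blast
  hence "(2::nat) ^ a2 \<le> 2 ^ k" using fy k by simp
  hence ka: "a2 \<le> k" by (rule power_le_imp_le_exp[rotated]) simp
  have "F A {y} \<le> 2 ^ (card A - card {y})" by (rule F_le) (use fA assms(3) in auto)
  hence "f A - f (A - {y}) \<le> 2 ^ Suc a2" using F1[of A y] a1 a2 by simp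
  hence "(2::nat) ^ k \<le> 2 ^ a2 + 2 ^ Suc a2" using k fy by simp
  also have "\<dots> < (2::nat) ^ Suc (Suc a2)" by simp
  finally have "k < Suc (Suc a2)" by (rule power_less_imp_less_exp[rotated]) simp
  moreover have "k \<noteq> Suc a2" using assms(2) H_iff[of A "Suc a2"] fA a1 a2 k by auto
  ultimately have "k = a2" using ka by linarith
  thus ?thesis using that a1 a2 k fy by simp
qed

lemma onlyC:
  assumes "\<And>y. y \<in> A - B \<Longrightarrow> f A = f (A - {y})"
  shows "f A = f (A \<inter> B)"
proof -
  have "{V\<in>S. V \<subseteq> A} = {V\<in>S. V \<subseteq> A \<inter> B}"
  proof (rule set_eqI, rule iffI)
    fix V assume V: "V \<in> {V\<in>S. V \<subseteq> A}"
    have "V \<subseteq> B"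
    proof
      fix y assume "y \<in> V"
      show "y \<in> B"
      proof (rule ccontr)
        assume "y \<notin> B"
        hence "f A = f (A - {y})" using assms \<open>y \<in> V\<close> V by blast
        hence "y \<notin> V" using F1_zero[of A y V] V by blast
        thus False using \<open>y \<in> V\<close> by blast
      qed
    qed
    thus "V \<in> {V\<in>S. V \<subseteq> A \<inter> B}" using V by blast
  qed auto
  thus ?thesis unfolding f_def by simp
qed

lemma intf: "f X = c * 2 ^ a \<Longrightarrow> int (f X) = int c * 2 ^ a"
  by simp

lemma p2:
  assumes AE: "A \<subseteq> E" and BE: "B \<subseteq> E" and HW: "H (A \<union> B)" and nA: "\<not> H A" and nB: "\<not> H B"
    and AB: "A - B = {y1, y2}" and BA: "B - A = {x1, x2}" and y12: "y1 \<noteq> y2" and x12: "x1 \<noteq> x2"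
    and allH: "\<And>v. v \<in> A \<union> B \<Longrightarrow> H (A \<union> B - {v})"
    and fA: "f A = 2 ^ a2" and fB: "f B = 2 ^ a2" and fC: "f (A \<inter> B) = 2 ^ a2"
    and cC: "card (A \<inter> B) = a2"
  shows False
proof -
  define W where "W = A \<union> B"
  define C where "C = A \<inter> B"
  have WE: "W \<subseteq> E" using AE BE W_def by blast
  have fW: "finite W" using WE finZ by blast
  have mem: "y1 \<in> A" "y2 \<in> A" "y1 \<notin> B" "y2 \<notin> B" "x1 \<in> B" "x2 \<in> B" "x1 \<notin> A" "x2 \<notin> A"
    using AB BA by blast+
  have cA: "card A = a2 + 2"
    using card_Int_Diff[of A B] AE finZ cC AB y12 by simp
  have cW: "card W = a2 + 4"
  proof -
    have "W = A \<union> (B - A)" "A \<inter> (B - A) = {}" unfolding W_def by blast+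
    hence "card W = card A + card (B - A)" using AE BE finZ
      by (metis card_Un_disjoint finite_Diff)
    thus ?thesis using cA BA x12 by simp
  qed
  have vW: "v \<in> W" if "v \<in> {x1, x2, y1, y2}" for v using that mem W_def by blast
  have fWv: "f W = 8 * 2 ^ a2" using HW H_iff[OF fW, of "a2 + 3"] cW W_def by (simp add: power_add)
  have f1: "f (W - {v}) = 4 * 2 ^ a2" if "v \<in> {x1, x2, y1, y2}" for v
  proof -
    have "card (W - {v}) = Suc (a2 + 2)" using vW[OF that] cW fW by simp
    moreover have "H (W - {v})" using allH vW[OF that] W_def by blast
    ultimately show ?thesis using H_iff[of "W - {v}" "a2 + 2"] fW by (simp add: power_add)
  qed
  have eA: "W - {x1} - {x2} = A" using mem unfolding W_def using BA by blast
  have eB: "W - {y1} - {y2} = B" using mem unfolding W_def using AB by blast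
  have st1: "pstar (W - {x1}) x2"
  proof (rule L2)
    show "W - {x1} \<subseteq> E" using WE by blast
    show "H (W - {x1})" using allH[of x1] mem W_def by blast
    show "x2 \<in> W - {x1}" using mem x12 W_def by blast
    show "\<not> H (W - {x1} - {x2})" using eA nA by simp
  qed
  have st2: "pstar (W - {x2}) x1"
  proof (rule L2)
    show "W - {x2} \<subseteq> E" using WE by blast
    show "H (W - {x2})" using allH[of x2] mem W_def by blast
    show "x1 \<in> W - {x2}" using mem x12 W_def by blast
    have "W - {x2} - {x1} = A" using eA by blast
    thus "\<not> H (W - {x2} - {x1})" using nA by simp
  qed
  have f2: "f (W - {u} - {v}) = 2 * 2 ^ a2" if "u \<in> {x1, x2}" "v \<in> {y1, y2}" for u v
  proof -
    have "H (W - {u} - {v})"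
    proof (cases "u = x1")
      case True
      show ?thesis by (rule F3[OF _ st1]) (use fW True that mem x12 y12 W_def in auto)
    next
      case False
      hence "u = x2" using that by blast
      show ?thesis by (rule F3[OF _ st2]) (use fW \<open>u = x2\<close> that mem x12 y12 W_def in auto)
    qed
    moreover have "card (W - {u} - {v}) = Suc (a2 + 1)"
    proof -
      have "u \<in> W" "v \<in> W - {u}" using that mem W_def by auto
      thus ?thesis using cW fW by simp
    qed
    ultimately show ?thesis using H_iff[of "W - {u} - {v}" "a2 + 1"] fW by simp
  qed
  have sand: "f Z = 2 ^ a2" if "C \<subseteq> Z" "Z \<subseteq> A \<or> Z \<subseteq> B" for Z
  proof -
    have "f C \<le> f Z" by (rule f_mono) fact
    moreover have "f Z \<le> 2 ^ a2" using that f_mono fA fB by metis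
    ultimately show ?thesis using fC C_def by simp
  qed
  have T0: "int (F W {x1, x2, y1, y2}) = int (F W {x2, y1, y2}) - int (F (W - {x1}) {x2, y1, y2})"
    using Fsplit[of W x1 "{x2, y1, y2}"] by simp
  have T1: "int (F W {x2, y1, y2}) = int (F W {y1, y2}) - int (F (W - {x2}) {y1, y2})"
    using Fsplit[of W x2 "{y1, y2}"] by simp
  have T2: "int (F (W - {x1}) {x2, y1, y2}) = int (F (W - {x1}) {y1, y2}) - int (F (W - {x1} - {x2}) {y1, y2})"
    using Fsplit[of "W - {x1}" x2 "{y1, y2}"] by simp
  note K1 = KI[of W y1 y2] and K2 = KI[of "W - {x1}" y1 y2] and K3 = KI[of "W - {x2}" y1 y2]
    and K4 = KI[of "W - {x1} - {x2}" y1 y2]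
  have v1: "int (f W) = 8 * 2 ^ a2" using fWv by simp
  have v2: "int (f (W - {y1})) = 4 * 2 ^ a2" "int (f (W - {y2})) = 4 * 2 ^ a2"
    "int (f (W - {x1})) = 4 * 2 ^ a2" "int (f (W - {x2})) = 4 * 2 ^ a2"
    using f1 by simp_all
  have v3: "int (f (W - {y1} - {y2})) = 2 ^ a2" "int (f (W - {x1} - {x2})) = 2 ^ a2"
    using eA eB fA fB by simp_all
  have v4: "int (f (W - {x1} - {y1})) = 2 * 2 ^ a2" "int (f (W - {x1} - {y2})) = 2 * 2 ^ a2"
    "int (f (W - {x2} - {y1})) = 2 * 2 ^ a2" "int (f (W - {x2} - {y2})) = 2 * 2 ^ a2"
    using f2 by simp_all
  have v5: "int (f (W - {x1} - {y1} - {y2})) = 2 ^ a2" "int (f (W - {x2} - {y1} - {y2})) = 2 ^ a2"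
    "int (f (W - {x1} - {x2} - {y1})) = 2 ^ a2" "int (f (W - {x1} - {x2} - {y2})) = 2 ^ a2"
    "int (f (W - {x1} - {x2} - {y1} - {y2})) = 2 ^ a2"
  proof -
    have s: "C \<subseteq> W - {x1} - {y1} - {y2}" "W - {x1} - {y1} - {y2} \<subseteq> B"
      "C \<subseteq> W - {x2} - {y1} - {y2}" "W - {x2} - {y1} - {y2} \<subseteq> B"
      "C \<subseteq> W - {x1} - {x2} - {y1}" "W - {x1} - {x2} - {y1} \<subseteq> A"
      "C \<subseteq> W - {x1} - {x2} - {y2}" "W - {x1} - {x2} - {y2} \<subseteq> A"
      "C \<subseteq> W - {x1} - {x2} - {y1} - {y2}" "W - {x1} - {x2} - {y1} - {y2} \<subseteq> A"
      using mem unfolding C_def W_def using AB BA by blast+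
    show "int (f (W - {x1} - {y1} - {y2})) = 2 ^ a2" using sand s(1,2) by simp
    show "int (f (W - {x2} - {y1} - {y2})) = 2 ^ a2" using sand s(3,4) by simp
    show "int (f (W - {x1} - {x2} - {y1})) = 2 ^ a2" using sand s(5,6) by simp
    show "int (f (W - {x1} - {x2} - {y2})) = 2 ^ a2" using sand s(7,8) by simp
    show "int (f (W - {x1} - {x2} - {y1} - {y2})) = 2 ^ a2" using sand s(9,10) by simp
  qed
  have "int (F W {x1, x2, y1, y2}) = - (2 ^ a2)"
    using T0 T1 T2 K1 K2 K3 K4 v1 v2 v3 v4 v5 by linarith
  moreover have "(0::int) < 2 ^ a2" by simp
  ultimately show False by linarith
qed

lemma U:
  shows "W \<subseteq> E \<Longrightarrow> H W \<Longrightarrow> A \<union> B = W \<Longrightarrow> H A \<or> H B"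
proof (induction "card W" arbitrary: W A B rule: less_induct)
  case less
  show ?case
  proof (rule ccontr)
    assume "\<not> (H A \<or> H B)"
    hence nA: "\<not> H A" and nB: "\<not> H B" by auto
    have fW: "finite W" using less.prems finZ by blast
    have AE: "A \<subseteq> E" and BE: "B \<subseteq> E" using less.prems by blast+
    have allH: "H (W - {v})" if v: "v \<in> W" for v
    proof (rule ccontr)
      assume "\<not> H (W - {v})"
      hence st: "pstar W v" using L2 less.prems v by blast
      show False
      proof (cases "v \<in> A")
        case True
        have "H A" by (rule F3[OF fW st True]) (use less.prems in blast)
        thus False using nA by blast
      next
        case False
        hence "v \<in> B" using v less.prems by blast
        have "H B" by (rule F3[OF fW st \<open>v \<in> B\<close>]) (use less.prems in blast)
        thus False using nB by blast
      qed
    qed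
    have stepA: "H (A - {y})" if y: "y \<in> A - B" for y
    proof (rule ccontr)
      assume n: "\<not> H (A - {y})"
      have yW: "y \<in> W" using y less.prems by blast
      have "H (A - {y}) \<or> H B"
      proof (rule less.hyps)
        show "card (W - {y}) < card W" using card_Diff1_less[OF fW yW] .
        show "W - {y} \<subseteq> E" using less.prems by blast
        show "H (W - {y})" using allH yW by blast
        show "A - {y} \<union> B = W - {y}" using less.prems y by blast
      qed
      thus False using n nB by blast
    qed
    have stepB: "H (B - {y})" if y: "y \<in> B - A" for y
    proof (rule ccontr)
      assume n: "\<not> H (B - {y})"
      have yW: "y \<in> W" using y less.prems by blast
      have "H A \<or> H (B - {y})"
      proof (rule less.hyps)
        show "card (W - {y}) < card W" using card_Diff1_less[OF fW yW] .
        show "W - {y} \<subseteq> E" using less.prems by blast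
        show "H (W - {y})" using allH yW by blast
        show "A \<union> (B - {y}) = W - {y}" using less.prems y by blast
      qed
      thus False using n nA by blast
    qed
    have neAB: "A - B \<noteq> {}"
    proof
      assume "A - B = {}"
      hence "B = W" using less.prems by blast
      thus False using nB less.prems by blast
    qed
    have neBA: "B - A \<noteq> {}"
    proof
      assume "B - A = {}"
      hence "A = W" using less.prems by blast
      thus False using nA less.prems by blast
    qed
    obtain y0 where y0: "y0 \<in> A - B" using neAB by blast
    obtain x0 where x0: "x0 \<in> B - A" using neBA by blast
    obtain a2 where a2: "card A = Suc (Suc a2)" "f A = 2 ^ a2"
      using side[OF AE nA _ stepA[OF y0]] y0 by blast
    obtain b2 where b2: "card B = Suc (Suc b2)" "f B = 2 ^ b2"
      using side[OF BE nB _ stepB[OF x0]] x0 by blast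
    have fAC: "f A = f (A \<inter> B)"
    proof (rule onlyC)
      fix y assume y: "y \<in> A - B"
      obtain a where "f A = 2 ^ a" "f (A - {y}) = 2 ^ a"
        using side[OF AE nA _ stepA[OF y]] y by blast
      thus "f A = f (A - {y})" by simp
    qed
    have fBC: "f B = f (B \<inter> A)"
    proof (rule onlyC)
      fix y assume y: "y \<in> B - A"
      obtain a where "f B = 2 ^ a" "f (B - {y}) = 2 ^ a"
        using side[OF BE nB _ stepB[OF y]] y by blast
      thus "f B = f (B - {y})" by simp
    qed
    have "B \<inter> A = A \<inter> B" by blast
    hence "(2::nat) ^ a2 = 2 ^ b2" using fAC fBC a2 b2 by simp
    hence ab: "a2 = b2" by simp
    have fA: "finite A" and fB: "finite B" using AE BE finZ by blast+
    have "f (A \<inter> B) \<le> 2 ^ card (A \<inter> B)" by (rule f_le) (use fA in simp)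
    hence "(2::nat) ^ a2 \<le> 2 ^ card (A \<inter> B)" using fAC a2 by simp
    hence a2C: "a2 \<le> card (A \<inter> B)" by (rule power_le_imp_le_exp[rotated]) simp
    have cA: "card A = card (A \<inter> B) + card (A - B)" by (rule card_Int_Diff[OF fA])
    have cB: "card B = card (A \<inter> B) + card (B - A)"
      using card_Int_Diff[OF fB, of A] \<open>B \<inter> A = A \<inter> B\<close> by simp
    have p1: "card (A - B) = card (B - A)" using cA cB a2 b2 ab by simp
    have p2': "card (B - A) \<le> 2" using cA a2 a2C p1 by simp
    have p0: "card (B - A) \<noteq> 0" using neBA fB by simp
    show False
    proof (cases "card (B - A) = 1")
      case True
      then obtain x where x: "B - A = {x}" using card_1_singleton_iff by (metis One_nat_def)
      hence "W - {x} = A" using less.prems by blast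
      moreover have "H (W - {x})" using allH x less.prems by blast
      ultimately show False using nA by simp
    next
      case False
      hence c2: "card (B - A) = 2" using p2' p0 by simp
      then obtain x1 x2 where x: "B - A = {x1, x2}" "x1 \<noteq> x2" using card_2_iff by metis
      obtain y1 y2 where y: "A - B = {y1, y2}" "y1 \<noteq> y2" using card_2_iff c2 p1 by metis
      show False
      proof (rule p2[OF AE BE _ nA nB y(1) x(1) y(2) x(2)])
        show "H (A \<union> B)" using less.prems by simp
        show "H (A \<union> B - {v})" if "v \<in> A \<union> B" for v using allH that less.prems by simp
        show "f A = 2 ^ a2" by fact
        show "f B = 2 ^ a2" using b2 ab by simp
        show "f (A \<inter> B) = 2 ^ a2" using fAC a2 by simp
        show "card (A \<inter> B) = a2" using cA a2 y by simp
      qed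
    qed
  qed
qed

lemma T:
  assumes "H E"
  shows "\<exists>e\<in>E. pstar E e"
proof -
  define N where "N = {Y. Y \<subseteq> E \<and> \<not> H Y}"
  have fN: "finite N" unfolding N_def using finE by (auto intro: finite_subset[of _ "Pow E"])
  have gen: "K \<subseteq> N \<Longrightarrow> \<not> H (\<Union>K) \<and> \<Union>K \<subseteq> E" if "finite K" for K
    using that
  proof (induction K rule: finite_induct)
    case empty thus ?case using H_empty by simp
  next
    case (insert Y K)
    have Y: "Y \<subseteq> E" "\<not> H Y" using insert.prems N_def by auto
    have K: "\<not> H (\<Union>K)" "\<Union>K \<subseteq> E" using insert.IH insert.prems by auto
    have "\<not> H (Y \<union> \<Union>K)"
    proof
      assume "H (Y \<union> \<Union>K)"
      hence "H Y \<or> H (\<Union>K)" using U[of "Y \<union> \<Union>K" Y "\<Union>K"] Y K by blast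
      thus False using Y K by blast
    qed
    thus ?case using Y K by simp
  qed
  have M: "\<not> H (\<Union>N)" "\<Union>N \<subseteq> E" using gen[OF fN] by auto
  hence "\<Union>N \<noteq> E" using assms by blast
  then obtain e where e: "e \<in> E" "e \<notin> \<Union>N" using M by blast
  have "pstar E e"
  proof (rule F4[OF finE e(1)])
    fix Y assume "e \<in> Y" "Y \<subseteq> E"
    thus "H Y" using e N_def by blast
  qed
  thus ?thesis using e by blast
qed

lemma f_empty: "f {} = 1"
proof -
  have "{Y\<in>S. Y \<subseteq> {}} = {{}}" using emp by auto
  thus ?thesis unfolding f_def by simp
qed

lemma cardS: "card S = f E"
proof -
  have "{Y\<in>S. Y \<subseteq> E} = S" using SPow by blast
  thus ?thesis unfolding f_def by simp
qed

lemma rank_eq: "rank_S E S E = log 2 (real (card S))"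
  unfolding rank_S_def using f_empty unfolding f_def by simp

end

theorem proposition6:
  fixes E :: "'a set" and S :: "'a set set"
  assumes "finite E" and "card E \<ge> 2" and "powerful E S"
  shows "rank_S E S E = real (card E) - 1 \<longleftrightarrow> (\<exists>e. is_star E S e)"
proof -
  interpret pw E S using assms by unfold_locales
  define n1 where "n1 = card E - 1"
  have n1: "card E = Suc n1" using assms(2) n1_def by simp
  show ?thesis
  proof
    assume r: "rank_S E S E = real (card E) - 1"
    obtain k where k: "card S = 2 ^ k" using f_pow[of E] cardS by auto
    have "real k = log 2 (real (card S))" using log2_of_power_eq[OF k] .
    hence "real k = real n1" using r rank_eq n1 by simp
    hence "f E = 2 ^ n1" using k cardS by simp
    hence "H E" using H_iff[OF finE n1] by simp
    then obtain e where e: "e \<in> E" "pstar E e" using T by blast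
    define T where "T = {X\<in>S. e \<notin> X}"
    have "is_star E S e" unfolding is_star_def
    proof (intro conjI exI)
      show "e \<in> E" by fact
      show "T \<subseteq> Pow (E - {e})" unfolding T_def using SPow by blast
      show "S = T \<union> {insert e X | X. X \<subseteq> E - {e} \<and> X \<notin> T}"
      proof (rule set_eqI, rule iffI)
        fix V assume V: "V \<in> S"
        show "V \<in> T \<union> {insert e X | X. X \<subseteq> E - {e} \<and> X \<notin> T}"
        proof (cases "e \<in> V")
          case False thus ?thesis using V T_def by blast
        next
          case True
          have X: "V - {e} \<subseteq> E - {e}" using V SPow by blast
          have "insert e (V - {e}) = V" using True by blast
          moreover have "(V - {e} \<in> S) \<longleftrightarrow> insert e (V - {e}) \<notin> S"
            using e(2) X unfolding pstar_def by blast
          ultimately have "V - {e} \<notin> S" using V by simp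
          hence "V - {e} \<notin> T" unfolding T_def by blast
          thus ?thesis using X \<open>insert e (V - {e}) = V\<close> by blast
        qed
      next
        fix V assume V: "V \<in> T \<union> {insert e X | X. X \<subseteq> E - {e} \<and> X \<notin> T}"
        show "V \<in> S"
        proof (cases "V \<in> T")
          case True thus ?thesis unfolding T_def by blast
        next
          case False
          then obtain X where X: "V = insert e X" "X \<subseteq> E - {e}" "X \<notin> T" using V by blast
          hence "X \<notin> S" unfolding T_def by blast
          thus ?thesis using e(2) X unfolding pstar_def by blast
        qed
      qed
    qed
    thus "\<exists>e. is_star E S e" by blast
  next
    assume "\<exists>e. is_star E S e"
    then obtain e T where e: "e \<in> E" and T: "T \<subseteq> Pow (E - {e})"
      and ST: "S = T \<union> {insert e X | X. X \<subseteq> E - {e} \<and> X \<notin> T}"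
      unfolding is_star_def by blast
    have img: "{insert e X | X. X \<subseteq> E - {e} \<and> X \<notin> T} = insert e ` (Pow (E - {e}) - T)" by blast
    have inj: "inj_on (insert e) (Pow (E - {e}) - T)"
    proof (rule inj_onI)
      fix A B assume "A \<in> Pow (E - {e}) - T" "B \<in> Pow (E - {e}) - T" "insert e A = insert e B"
      hence "e \<notin> A" "e \<notin> B" "insert e A = insert e B" by auto
      thus "A = B" by (metis Diff_insert_absorb)
    qed
    have fT: "finite T" using T finE by (meson finite_Diff finite_Pow_iff finite_subset)
    have fP: "finite (Pow (E - {e}))" using finE by simp
    have "card S = card T + card (insert e ` (Pow (E - {e}) - T))"
      unfolding ST img by (rule card_Un_disjoint) (use fT fP T in auto)
    also have "\<dots> = card T + card (Pow (E - {e}) - T)" using card_image[OF inj] by simp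
    also have "\<dots> = card (Pow (E - {e}))"
    proof -
      have "card (Pow (E - {e}) - T) = card (Pow (E - {e})) - card T" using card_Diff_subset[OF fT T] .
      moreover have "card T \<le> card (Pow (E - {e}))" using card_mono[OF fP T] .
      ultimately show ?thesis by linarith
    qed
    also have "\<dots> = 2 ^ n1" using finE e n1 by (simp add: card_Pow)
    finally have "card S = 2 ^ n1" .
    hence "log 2 (real (card S)) = real n1" using log2_of_power_eq by metis
    thus "rank_S E S E = real (card E) - 1" using rank_eq n1 by simp
  qed
qed

end
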